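(* Let $\alpha,\beta\in\{-1,0,1\}$, and let $\tilde{C}\in\{0,1\}^{\tilde{K}\times n}$ and $\hat{C}\in\{0,1\}^{\hat{K}\times n}$ be cost matrices of two ordinal objectives on the same $n$ elements. Then the matrix \[ A=\begin{pmatrix}\alpha\,\tilde{C}\\ \mathbf{1}^\top\\ \beta\,\hat{C}\end{pmatrix}, \] where $\mathbf{1}\in\mathbb{R}^n$ is the all-ones vector, is totally unimodular.
   Context: An ordinal objective on $n$ elements with $K$ categories $\eta_1\prec\dots\prec\eta_K$ is given by an assignment $o:\{1,\dots,n\}\to\{\eta_1,\dots,\eta_K\}$; its cost matrix $C\in\{0,1\}^{K\times n}$ has $C_{ji}=1$ if $j\le k$ where $o(i)=\eta_k$, and $C_{ji}=0$ otherwise. $\tilde{C}$ and $\hat{C}$ are such matrices for assignments $\tilde{o}$ (with $\tilde{K}$ categories) and $\hat{o}$ (with $\hat{K}$ categories). A matrix is totally unimodular if every square submatrix has determinant in $\{-1,0,1\}$. *)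

theory Defs
  imports "Jordan_Normal_Form.Determinant" "Jordan_Normal_Form.DL_Submatrix"
begin

text \<open>Categories eta_1 < ... < eta_K are encoded by 1..K; an ordinal objective on
  elements 0..n-1 is a map f with f i in {1..K}.\<close>

definition ordinal_assignment :: "nat \<Rightarrow> nat \<Rightarrow> (nat \<Rightarrow> nat) \<Rightarrow> bool" where
  "ordinal_assignment K n f \<longleftrightarrow> (\<forall>i<n. 1 \<le> f i \<and> f i \<le> K)"

definition ordinal_cost_matrix :: "nat \<Rightarrow> nat \<Rightarrow> (nat \<Rightarrow> nat) \<Rightarrow> int mat" where
  "ordinal_cost_matrix K n f = mat K n (\<lambda>(j, i). if j + 1 \<le> f i then 1 else 0)"

definition totally_unimodular :: "int mat \<Rightarrow> bool" where
  "totally_unimodular A \<longleftrightarrow>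
     (\<forall>I J. I \<subseteq> {..<dim_row A} \<longrightarrow> J \<subseteq> {..<dim_col A} \<longrightarrow> card I = card J \<longrightarrow>
        det (submatrix A I J) \<in> {-1, 0, 1})"

end

theory Submission
  imports Defs
begin


lemma det_subcols:
  fixes A :: "int mat"
  assumes A: "A \<in> carrier_mat k k" and c0: "c0 < k" and fin: "finite S"
    and S: "S \<subseteq> {..<k} - {c0}"
  shows "det (mat k k (\<lambda>(r,c). if c \<in> S then A$$(r,c) - A$$(r,c0) else A$$(r,c))) = det A"
  using fin S
proof (induction S rule: finite_induct)
  case empty
  have "mat k k (\<lambda>(r,c). if c \<in> {} then A$$(r,c) - A$$(r,c0) else A$$(r,c)) = A"
    using A by (intro eq_matI) auto
  then show ?case by simp
next
  case (insert x S)
  define B where "B = mat k k (\<lambda>(r,c). if c \<in> S then A$$(r,c) - A$$(r,c0) else A$$(r,c))"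
  have B: "B \<in> carrier_mat k k" unfolding B_def by auto
  have "mat k k (\<lambda>(r,c). if c \<in> insert x S then A$$(r,c) - A$$(r,c0) else A$$(r,c)) = addcol (-1) x c0 B"
    using insert.prems insert.hyps c0 by (intro eq_matI) (auto simp: B_def mat_addcol_def)
  also have "det \<dots> = det B" using det_addcol[OF c0 _ B] insert.prems by auto
  also have "\<dots> = det A" unfolding B_def using insert by auto
  finally show ?case .
qed

lemma key:
  fixes A :: "int mat" and s :: "nat \<Rightarrow> int" and lo hi p :: "nat \<Rightarrow> nat"
  assumes "A \<in> carrier_mat k k" "\<forall>r<k. s r \<in> {-1,0,1}"
    "\<forall>r<k. \<forall>c<k. A$$(r,c) = s r * (if lo c \<le> p r \<and> p r < hi c then 1 else 0)"
  shows "det A \<in> {-1,0,1}"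
  using assms
proof (induction k arbitrary: A s lo hi p)
  case 0
  then show ?case by simp
next
  case (Suc k)
  note A = Suc.prems(1) and sA = Suc.prems(2) and eA = Suc.prems(3)
  define m where "m = Min (p ` {..<Suc k})"
  have "m \<in> p ` {..<Suc k}" unfolding m_def by (intro Min_in) auto
  then obtain r0 where r0: "r0 < Suc k" "p r0 = m" by auto
  have r0min: "\<forall>r<Suc k. p r0 \<le> p r" using r0 unfolding m_def by auto
  define T where "T = {c. c < Suc k \<and> lo c \<le> p r0 \<and> p r0 < hi c}"
  show ?case
  proof (cases "T = {}")
    case True
    have "det A = (\<Sum>j<Suc k. A $$ (r0,j) * cofactor A r0 j)"
      by (rule laplace_expansion_row[OF A r0(1)])
    also have "\<dots> = 0" using True eA r0 unfolding T_def by (intro sum.neutral) auto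
    finally show ?thesis by simp
  next
    case False
    have finT: "finite T" unfolding T_def by auto
    define h where "h = Min (hi ` T)"
    have "h \<in> hi ` T" unfolding h_def using finT False by (intro Min_in) auto
    then obtain c0 where c0: "c0 \<in> T" "hi c0 = h" by auto
    have c0min: "\<forall>c\<in>T. hi c0 \<le> hi c" using c0 finT unfolding h_def by auto
    have c0k: "c0 < Suc k" using c0 unfolding T_def by auto
    define S where "S = T - {c0}"
    define A' where "A' = mat (Suc k) (Suc k) (\<lambda>(r,c). if c \<in> S then A$$(r,c) - A$$(r,c0) else A$$(r,c))"
    have detA': "det A' = det A" unfolding A'_def
      by (rule det_subcols[OF A c0k]) (auto simp: S_def T_def finT)
    have A'c: "A' \<in> carrier_mat (Suc k) (Suc k)" unfolding A'_def by auto
    define lo' where "lo' c = (if c \<in> S then hi c0 else lo c)" for c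
    have eA': "\<forall>r<Suc k. \<forall>c<Suc k. A'$$(r,c) = s r * (if lo' c \<le> p r \<and> p r < hi c then 1 else 0)"
    proof (intro allI impI)
      fix r c assume r: "r < Suc k" and c: "c < Suc k"
      show "A'$$(r,c) = s r * (if lo' c \<le> p r \<and> p r < hi c then 1 else 0)"
      proof (cases "c \<in> S")
        case True
        then have cT: "c \<in> T" and "lo c \<le> p r0" "lo c0 \<le> p r0" "hi c0 \<le> hi c"
          using c0 c0min unfolding S_def T_def by auto
        moreover have "p r0 \<le> p r" using r0min r by auto
        ultimately show ?thesis using True r c eA c0k unfolding A'_def lo'_def
          by auto
      next
        case False
        then show ?thesis using r c eA unfolding A'_def lo'_def by auto
      qed
    qed
    have row0: "\<forall>c<Suc k. A'$$(r0,c) = (if c = c0 then s r0 else 0)"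
    proof (intro allI impI)
      fix c assume c: "c < Suc k"
      show "A'$$(r0,c) = (if c = c0 then s r0 else 0)"
      proof (cases "c = c0")
        case True
        then have "c \<notin> S" unfolding S_def by auto
        then show ?thesis using eA' c0 c r0 True unfolding T_def lo'_def by auto
      next
        case False
        show ?thesis
        proof (cases "c \<in> S")
          case True
          then show ?thesis using eA' c r0 False c0 unfolding lo'_def T_def by auto
        next
          case nS: False
          then have "c \<notin> T" using False unfolding S_def by auto
          then show ?thesis using eA' c r0 False nS unfolding lo'_def T_def by auto
        qed
      qed
    qed
    have "det A' = (\<Sum>j<Suc k. A' $$ (r0,j) * cofactor A' r0 j)"
      by (rule laplace_expansion_row[OF A'c r0(1)])
    also have "\<dots> = (\<Sum>j<Suc k. (if j = c0 then s r0 * cofactor A' r0 j else 0))"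
      using row0 by (intro sum.cong) auto
    also have "\<dots> = s r0 * cofactor A' r0 c0" using c0k by simp
    finally have dA': "det A' = s r0 * ((-1)^(r0+c0) * det (mat_delete A' r0 c0))"
      unfolding cofactor_def .
    define f where "f i = (if i < r0 then i else Suc i)" for i
    define g where "g j = (if j < c0 then j else Suc j)" for j
    have Mc: "mat_delete A' r0 c0 \<in> carrier_mat k k" using A'c by (auto simp: mat_delete_def)
    have "det (mat_delete A' r0 c0) \<in> {-1,0,1}"
    proof (rule Suc.IH[OF Mc, of "s \<circ> f" "lo' \<circ> g" "p \<circ> f" "hi \<circ> g"])
      show "\<forall>r<k. (s \<circ> f) r \<in> {- 1, 0, 1}" using sA unfolding f_def by auto
      show "\<forall>r<k. \<forall>c<k. mat_delete A' r0 c0 $$ (r, c) =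
            (s \<circ> f) r * (if (lo' \<circ> g) c \<le> (p \<circ> f) r \<and> (p \<circ> f) r < (hi \<circ> g) c then 1 else 0)"
      proof (intro allI impI)
        fix r c assume r: "r < k" and c: "c < k"
        have "f r < Suc k" "g c < Suc k" using r c unfolding f_def g_def by auto
        moreover have "mat_delete A' r0 c0 $$ (r, c) = A' $$ (f r, g c)"
          using r c A'c unfolding mat_delete_def f_def g_def by auto
        ultimately show "mat_delete A' r0 c0 $$ (r, c) =
            (s \<circ> f) r * (if (lo' \<circ> g) c \<le> (p \<circ> f) r \<and> (p \<circ> f) r < (hi \<circ> g) c then 1 else 0)"
          using eA' by auto
      qed
    qed
    moreover have "s r0 \<in> {-1,0,1}" using sA r0 by auto
    moreover have "((-1::int)^(r0+c0)) \<in> {-1,1}"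
      by (cases "even (r0+c0)") auto
    ultimately have "det A' \<in> {-1,0,1}" unfolding dA' by auto
    then show ?thesis using detA' by simp
  qed
qed

lemma entry:
  fixes \<alpha> \<beta> :: int and Kt Kh n :: nat and ot oh :: "nat \<Rightarrow> nat"
  assumes i: "i < Kt + (1 + Kh)" and c: "c < n"
  shows "((\<alpha> \<cdot>\<^sub>m ordinal_cost_matrix Kt n ot)
            @\<^sub>r (mat 1 n (\<lambda>_. 1))
            @\<^sub>r (\<beta> \<cdot>\<^sub>m ordinal_cost_matrix Kh n oh)) $$ (i, c) =
    (if i < Kt then \<alpha> else if i = Kt then 1 else \<beta>) *
    (if Kt - ot c \<le> (if i < Kt then Kt - 1 - i else i) \<and> (if i < Kt then Kt - 1 - i else i) < Kt + 1 + oh c then 1 else 0)"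
  using i c by (auto simp: append_rows_def ordinal_cost_matrix_def)

theorem corollary2:
  fixes \<alpha> \<beta> :: int and Kt Kh n :: nat and ot oh :: "nat \<Rightarrow> nat"
  assumes "\<alpha> \<in> {-1, 0, 1}" and "\<beta> \<in> {-1, 0, 1}"
    and "ordinal_assignment Kt n ot" and "ordinal_assignment Kh n oh"
  shows "totally_unimodular
           ((\<alpha> \<cdot>\<^sub>m ordinal_cost_matrix Kt n ot)
            @\<^sub>r (mat 1 n (\<lambda>_. 1))
            @\<^sub>r (\<beta> \<cdot>\<^sub>m ordinal_cost_matrix Kh n oh))"
proof -
  define B where "B = ((\<alpha> \<cdot>\<^sub>m ordinal_cost_matrix Kt n ot)
            @\<^sub>r (mat 1 n (\<lambda>_. 1))
            @\<^sub>r (\<beta> \<cdot>\<^sub>m ordinal_cost_matrix Kh n oh))"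
  have Bc: "B \<in> carrier_mat (Kt + (1 + Kh)) n" unfolding B_def
    by (intro carrier_append_rows) (auto simp: ordinal_cost_matrix_def)
  define S :: "nat \<Rightarrow> int" where "S i = (if i < Kt then \<alpha> else if i = Kt then 1 else \<beta>)" for i
  define P where "P i = (if i < Kt then Kt - 1 - i else i)" for i
  define lo where "lo c = Kt - ot c" for c
  define hi where "hi c = Kt + 1 + oh c" for c
  have eB: "B $$ (i,c) = S i * (if lo c \<le> P i \<and> P i < hi c then 1 else 0)"
    if "i < Kt + (1 + Kh)" "c < n" for i c
    using entry[OF that, of \<alpha> ot \<beta> oh] unfolding B_def S_def P_def lo_def hi_def by simp
  show ?thesis
    unfolding B_def[symmetric] totally_unimodular_def
  proof (intro allI impI)
    fix I J assume I: "I \<subseteq> {..<dim_row B}" and J: "J \<subseteq> {..<dim_col B}" and IJ: "card I = card J"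
    have I': "{i. i < dim_row B \<and> i \<in> I} = I" using I by auto
    have J': "{i. i < dim_col B \<and> i \<in> J} = J" using J by auto
    have M: "submatrix B I J \<in> carrier_mat (card I) (card I)"
      using IJ I' J' by (auto simp: dim_submatrix)
    show "det (submatrix B I J) \<in> {-1,0,1}"
    proof (rule key[OF M, of "S \<circ> pick I" "lo \<circ> pick J" "P \<circ> pick I" "hi \<circ> pick J"])
      show "\<forall>r<card I. (S \<circ> pick I) r \<in> {- 1, 0, 1}" using assms(1,2) by (auto simp: S_def)
      show "\<forall>r<card I. \<forall>c<card I. submatrix B I J $$ (r, c) =
        (S \<circ> pick I) r * (if (lo \<circ> pick J) c \<le> (P \<circ> pick I) r \<and> (P \<circ> pick I) r < (hi \<circ> pick J) c then 1 else 0)"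
      proof (intro allI impI)
        fix r c assume r: "r < card I" and c: "c < card I"
        have pr: "pick I r \<in> I" using pick_in_set_le[OF r] .
        have pc: "pick J c \<in> J" using pick_in_set_le c IJ by metis
        have "submatrix B I J $$ (r, c) = B $$ (pick I r, pick J c)"
          using r c IJ I' J' by (intro submatrix_index) auto
        moreover have "pick I r < Kt + (1 + Kh)" "pick J c < n" using pr pc I J Bc by auto
        ultimately show "submatrix B I J $$ (r, c) =
        (S \<circ> pick I) r * (if (lo \<circ> pick J) c \<le> (P \<circ> pick I) r \<and> (P \<circ> pick I) r < (hi \<circ> pick J) c then 1 else 0)"
          using eB by simp
      qed
    qed
  qed
qed

end
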